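(* Fix $\alpha\in(0,1/2)$ and $q_1,q_3\in(0,1)$. Define $m^*(3/4,3/4)=16\alpha$, $m^*(3/4,1/4)=m^*(1/4,3/4)=\frac{8(1-2\alpha)}{3}$, $m^*(1/4,1/4)=\frac{16\alpha}{9}$, $m^*=\frac{16(4\alpha+3)}{9}$, $\overline{q}^*=\frac{8\alpha+3}{8\alpha+6}$, $\overline{\lambda}^*=1/m^*$, $$\overline{q}=\frac{1}{m^*}\Big[\big(m^*(\tfrac34,\tfrac34)+m^*(\tfrac34,\tfrac14)\big)q_3+\big(m^*(\tfrac14,\tfrac34)+m^*(\tfrac14,\tfrac14)\big)q_1\Big],$$ $$\overline{\lambda}=\frac{1}{m^*}\Big(m^*(\tfrac34,\tfrac34)\tfrac{1-q_3}{4}+m^*(\tfrac34,\tfrac14)\tfrac{3(1-q_3)}{4}+m^*(\tfrac14,\tfrac34)\tfrac{1-q_1}{4}+m^*(\tfrac14,\tfrac14)\tfrac{3(1-q_1)}{4}\Big),$$ $M=\frac{2(4\alpha+1)}{3(1-q_3)}+\frac{2(3-4\alpha)}{3(1-q_1)}$ and $Q=\big(q_3\frac{2(4\alpha+1)}{3(1-q_3)}+q_1\frac{2(3-4\alpha)}{3(1-q_1)}\big)/M$. Suppose either (1) $\alpha>1/4$, $(12\alpha+3)q_3+(3-4\alpha)q_1>8\alpha+3$ and $\frac{4\alpha+1}{1-q_3}+\frac{3-4\alpha}{1-q_1}<\frac{8(4\alpha+3)}{3}$; or (2) $\alpha\le 1/4$, $6q_3+2q_1>5$ and $\frac{4\alpha+1}{1-q_3}+\frac{3-4\alpha}{1-q_1}<\frac{8(4\alpha+3)}{3}$.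 Then $\overline{q}>\overline{q}^*$ and $\overline{\lambda}<\overline{\lambda}^*$, while the treatment's steady-state performance is worse than the status quo's: $M<m^*$ and $Q<\overline{q}^*$.
   Context: Model: user types $(x,e)\in\{1/4,3/4\}^2$ with per-period inflow masses $\alpha$ for $(3/4,3/4)$ and $(1/4,1/4)$ and $1/2-\alpha$ for $(3/4,1/4)$ and $(1/4,3/4)$; an algorithm gives quality $q(x)\in(0,1)$ to segment $x$ and a type-$(x,e)$ user churns each period with probability $(1-q(x))(1-e)$; the steady-state mass of type $(x,e)$ is $F(x,e)/((1-q(x))(1-e))$. The status quo is $q^*(x)=x$ with steady-state masses $m^*(x,e)$, total $m^*$, ARQ $\overline{q}^*$ and churn rate $\overline{\lambda}^*$. The treatment has $q(1/4)=q_1,q(3/4)=q_3$; $\overline{q},\overline{\lambda}$ are its ARQ and churn rate observed in a one-period experiment on the status quo population; $M,Q$ are its own steady-state total population and ARQ. *)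

theory Defs
  imports Complex_Main
begin

definition mstar :: "real \<Rightarrow> real \<Rightarrow> real \<Rightarrow> real" where
  "mstar \<alpha> x e =
     (if x = 3/4 \<and> e = 3/4 then 16*\<alpha>
      else if x = 1/4 \<and> e = 1/4 then 16*\<alpha>/9
      else 8*(1 - 2*\<alpha>)/3)"

definition mstar_total :: "real \<Rightarrow> real" where
  "mstar_total \<alpha> = 16*(4*\<alpha> + 3)/9"

definition qbar_star :: "real \<Rightarrow> real" where
  "qbar_star \<alpha> = (8*\<alpha> + 3)/(8*\<alpha> + 6)"

definition lambar_star :: "real \<Rightarrow> real" where
  "lambar_star \<alpha> = 1 / mstar_total \<alpha>"

definition qbar :: "real \<Rightarrow> real \<Rightarrow> real \<Rightarrow> real" where
  "qbar \<alpha> q1 q3 = (1 / mstar_total \<alpha>) *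
     ((mstar \<alpha> (3/4) (3/4) + mstar \<alpha> (3/4) (1/4)) * q3
      + (mstar \<alpha> (1/4) (3/4) + mstar \<alpha> (1/4) (1/4)) * q1)"

definition lambar :: "real \<Rightarrow> real \<Rightarrow> real \<Rightarrow> real" where
  "lambar \<alpha> q1 q3 = (1 / mstar_total \<alpha>) *
     (mstar \<alpha> (3/4) (3/4) * ((1 - q3)/4) + mstar \<alpha> (3/4) (1/4) * (3*(1 - q3)/4)
      + mstar \<alpha> (1/4) (3/4) * ((1 - q1)/4) + mstar \<alpha> (1/4) (1/4) * (3*(1 - q1)/4))"

definition Mtreat :: "real \<Rightarrow> real \<Rightarrow> real \<Rightarrow> real" where
  "Mtreat \<alpha> q1 q3 = 2*(4*\<alpha> + 1)/(3*(1 - q3)) + 2*(3 - 4*\<alpha>)/(3*(1 - q1))"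

definition Qtreat :: "real \<Rightarrow> real \<Rightarrow> real \<Rightarrow> real" where
  "Qtreat \<alpha> q1 q3 = (q3 * (2*(4*\<alpha> + 1)/(3*(1 - q3))) + q1 * (2*(3 - 4*\<alpha>)/(3*(1 - q1))))
                     / Mtreat \<alpha> q1 q3"

end

theory Submission
  imports Defs
begin

lemma case1_core:
  fixes A B u v c :: real
  assumes "A > 2" "B = 4 - A" "A < 3" "0 < u" "u < 1" "0 < v" "v < 1"
    and "3*A*u + B*v < 3" and "A/u + B/v < c" and "c = 8*(A+2)/3"
  shows "6*u + 2*v < 3"
proof (cases "3*u \<ge> v")
  case True
  have "(A-2)*(3*u-v) \<ge> 0" using True assms by simp
  moreover have "(A-2)*(3*u-v) = 3*A*u - 6*u - A*v + 2*v"  by (simp add: algebra_simps)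
  moreover have "B*v = 4*v - A*v" unfolding assms(2) by (simp add: algebra_simps)
  ultimately show ?thesis using assms by linarith
next
  case False
  show ?thesis
  proof (rule ccontr)
    assume "\<not> 6*u + 2*v < 3"
    hence v34: "v > 3/4" using False by linarith
    have Bpos: "B > 0" using assms by simp
    have cv: "B - c*v < 0"
    proof -
      have "c*v > c*(3/4)" using v34 assms by (intro mult_strict_left_mono) auto
      moreover have "c*(3/4) = 2*(A+2)" using assms(10) by simp
      ultimately have "c*v > 2*(A+2)" by simp
      thus ?thesis using assms(2,1) by simp
    qed
    have h: "B*(4*v-3)*(2*(A+2)*v-3) > 0"
    proof -
      have "2*(A+2)*v > 2*(A+2)*(3/4)" using v34 assms by (intro mult_strict_left_mono) auto
      hence "2*(A+2)*v - 3 > 0" using assms by simp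
      moreover have "4*v-3 > 0" using v34 by simp
      ultimately show ?thesis using Bpos by simp
    qed
    have eqh: "3*(3*A^2*v + (3-B*v)*(B-c*v)) = B*(4*v-3)*(2*(A+2)*v-3)"
      unfolding assms(2) assms(10) by (simp add: field_simps power2_eq_square)
    have "3*A*u*(B-c*v) > (3-B*v)*(B-c*v)"
      using assms cv by (intro mult_strict_right_mono_neg) auto
    hence "3*A*(A*v + B*u - c*u*v) > 0" using h eqh
      by (simp add: algebra_simps power2_eq_square)
    moreover have "0 < 3*A" using assms(1) by simp
    ultimately have pos: "A*v + B*u - c*u*v > 0"
      using zero_less_mult_pos by blast
    have "A/u + B/v = (A*v + B*u)/(u*v)" using assms by (simp add: field_simps)
    hence "(A*v + B*u)/(u*v) < c" using assms(9) by linarith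
    moreover have uvp: "u*v > 0" using assms by simp
    ultimately have "A*v + B*u < c*(u*v)" by (simp add: pos_divide_less_eq)
    thus False using pos by (simp add: mult.assoc)
  qed
qed

lemma case2_core:
  fixes A B u v c :: real
  assumes "A \<le> 2" "B = 4 - A" "A > 1" "0 < u" "u < 1" "0 < v" "v < 1"
    and "6*u + 2*v < 3" and "A/u + B/v < c" and "c = 8*(A+2)/3"
  shows "3*A*u + B*v < 3"
proof (cases "3*u \<ge> v")
  case True
  have "(2-A)*(3*u-v) \<ge> 0" using True assms by simp
  moreover have "(2-A)*(3*u-v) = 6*u - 3*A*u - 2*v + A*v"  by (simp add: algebra_simps)
  moreover have "B*v = 4*v - A*v" unfolding assms(2) by (simp add: algebra_simps)
  ultimately show ?thesis using assms by linarith
next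
  case False
  have u14: "u < 1/4" using False assms by linarith
  have Bpos: "B > 0" using assms by simp
  have d: "3 - 6*u > 0" using u14 by simp
  have "v < (3-6*u)/2" using assms by simp
  hence "B/v > B/((3-6*u)/2)" using Bpos assms d by (intro divide_strict_left_mono) auto
  hence bv: "B/v > 2*B/(3-6*u)" by (simp add: mult.commute)
  have k: "3*(4*u-1)*(4*(A+2)*u - 3*A) > 0"
  proof -
    have "4*(A+2)*u < 4*(A+2)*(1/4)" using u14 assms by (intro mult_strict_left_mono) auto
    moreover have "4*(A+2)*(1/4) = A+2" by simp
    ultimately have "4*(A+2)*u - 3*A < 0" using assms by linarith
    moreover have "4*u-1 < 0" using u14 by simp
    ultimately show ?thesis by (simp add: mult_neg_neg)
  qed
  have eqk: "3*A*(3-6*u) + 6*B*u - 8*(A+2)*u*(3-6*u) = 3*(4*u-1)*(4*(A+2)*u - 3*A)"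
    unfolding assms(2) by (simp add: algebra_simps)
  have "A/u + 2*B/(3-6*u) - c = (3*A*(3-6*u) + 6*B*u - 8*(A+2)*u*(3-6*u)) / (3*u*(3-6*u))"
    unfolding assms(10) using assms(4) d by (simp add: field_simps)
  also have "\<dots> > 0" using eqk k assms d by simp
  finally have "A/u + 2*B/(3-6*u) > c" by simp
  thus ?thesis using bv assms by linarith
qed

theorem proposition2:
  fixes \<alpha> q1 q3 :: real
  assumes "0 < \<alpha>" "\<alpha> < 1/2"
    and "0 < q1" "q1 < 1" "0 < q3" "q3 < 1"
    and "(\<alpha> > 1/4 \<and> (12*\<alpha> + 3)*q3 + (3 - 4*\<alpha>)*q1 > 8*\<alpha> + 3
            \<and> (4*\<alpha> + 1)/(1 - q3) + (3 - 4*\<alpha>)/(1 - q1) < 8*(4*\<alpha> + 3)/3)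
       \<or> (\<alpha> \<le> 1/4 \<and> 6*q3 + 2*q1 > 5
            \<and> (4*\<alpha> + 1)/(1 - q3) + (3 - 4*\<alpha>)/(1 - q1) < 8*(4*\<alpha> + 3)/3)"
  shows "qbar \<alpha> q1 q3 > qbar_star \<alpha> \<and> lambar \<alpha> q1 q3 < lambar_star \<alpha>
         \<and> Mtreat \<alpha> q1 q3 < mstar_total \<alpha> \<and> Qtreat \<alpha> q1 q3 < qbar_star \<alpha>"
proof -
  define A where "A = 4*\<alpha>+1"
  define B where "B = 3-4*\<alpha>"
  define u where "u = 1-q3"
  define v where "v = 1-q1"
  have "8*(A+2)/3 = 8*(4*\<alpha> + 3)/3" unfolding A_def by simp
  hence cons: "A/u + B/v < 8*(A+2)/3"
    using assms(7) unfolding A_def B_def u_def v_def by auto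
  have e1: "(12*\<alpha> + 3)*q3 + (3 - 4*\<alpha>)*q1 > 8*\<alpha> + 3 \<longleftrightarrow> 3*A*u + B*v < 3"
    unfolding A_def B_def u_def v_def by (simp add: algebra_simps)
  have e2: "6*q3 + 2*q1 > 5 \<longleftrightarrow> 6*u + 2*v < 3"
    unfolding u_def v_def by (simp add: algebra_simps)
  have uv: "0 < u" "u < 1" "0 < v" "v < 1" using assms unfolding u_def v_def by auto
  have K: "3*A*u + B*v < 3 \<and> 6*u + 2*v < 3"
  proof (cases "\<alpha> > 1/4")
    case True
    hence h1: "3*A*u + B*v < 3" using assms(7) e1 by auto
    moreover have "6*u + 2*v < 3"
      using case1_core[OF _ _ _ uv h1 cons] True assms unfolding A_def B_def by auto
    ultimately show ?thesis by simp
  next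
    case False
    hence h2: "6*u + 2*v < 3" using assms(7) e2 by auto
    moreover have "3*A*u + B*v < 3"
      using case2_core[OF _ _ _ uv h2 cons] False assms unfolding A_def B_def by auto
    ultimately show ?thesis by simp
  qed
  have g1: "(12*\<alpha> + 3)*q3 + (3 - 4*\<alpha>)*q1 > 8*\<alpha> + 3" using K e1 by simp
  have g2: "6*q3 + 2*q1 > 5" using K e2 by simp
  have den: "8*\<alpha>+6 > 0" "4*\<alpha>+3 > 0" using assms by auto
  have qb: "qbar \<alpha> q1 q3 = ((12*\<alpha> + 3)*q3 + (3 - 4*\<alpha>)*q1)/(8*\<alpha>+6)"
    unfolding qbar_def mstar_def mstar_total_def using den by (simp add: field_simps)
  have P1: "qbar \<alpha> q1 q3 > qbar_star \<alpha>"
    unfolding qb qbar_star_def using g1 den by (simp add: divide_strict_right_mono)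
  have mt: "mstar_total \<alpha> > 0" unfolding mstar_total_def using den by simp
  have lb: "lambar \<alpha> q1 q3 = (2*(1-q3) + (2/3)*(1-q1)) / mstar_total \<alpha>"
    unfolding lambar_def mstar_def using mt by (simp add: field_simps)
  have P2: "lambar \<alpha> q1 q3 < lambar_star \<alpha>"
    unfolding lb lambar_star_def using g2 mt by (intro divide_strict_right_mono) (auto simp: field_simps)
  have nz: "1 - q3 \<noteq> 0" "1 - q1 \<noteq> 0" using assms by auto
  have Mt: "Mtreat \<alpha> q1 q3 = (2/3)*(A/u + B/v)"
    unfolding Mtreat_def A_def[symmetric] B_def[symmetric] u_def[symmetric] v_def[symmetric]
    using uv by (simp add: field_simps)
  have P3: "Mtreat \<alpha> q1 q3 < mstar_total \<alpha>"
  proof -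
    have "(2/3)*(A/u+B/v) < (2/3)*(8*(A+2)/3)" using cons by simp
    moreover have "(2/3)*(8*(A+2)/3) = mstar_total \<alpha>" unfolding A_def mstar_total_def by simp
    ultimately show ?thesis unfolding Mt by linarith
  qed
  have Mpos: "Mtreat \<alpha> q1 q3 > 0"
  proof -
    have "A/u > 0" "B/v > 0" unfolding A_def B_def using uv assms by auto
    thus ?thesis unfolding Mt by simp
  qed
  have Qt: "Qtreat \<alpha> q1 q3 = 1 - (8/3)/Mtreat \<alpha> q1 q3"
  proof -
    have q3u: "q3 = 1 - u" and q1v: "q1 = 1 - v" unfolding u_def v_def by simp_all
    have AB: "A + B = 4" unfolding A_def B_def by simp
    have "q3*(2*A/(3*u)) + q1*(2*B/(3*v)) = (2/3)*(A/u + B/v) - (2/3)*(A+B)"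
      unfolding q3u q1v using uv by (simp add: field_simps)
    hence num: "q3*(2*A/(3*u)) + q1*(2*B/(3*v)) = Mtreat \<alpha> q1 q3 - 8/3"
      unfolding Mt AB by simp
    have "Qtreat \<alpha> q1 q3 = (q3*(2*A/(3*u)) + q1*(2*B/(3*v))) / Mtreat \<alpha> q1 q3"
      unfolding Qtreat_def A_def[symmetric] B_def[symmetric] u_def[symmetric] v_def[symmetric]
      by simp
    also have "\<dots> = (Mtreat \<alpha> q1 q3 - 8/3) / Mtreat \<alpha> q1 q3" unfolding num ..
    also have "\<dots> = 1 - (8/3)/Mtreat \<alpha> q1 q3" using Mpos by (simp add: field_simps)
    finally show ?thesis .
  qed
  have "(8/3)/Mtreat \<alpha> q1 q3 > (8/3)/mstar_total \<alpha>"
    using P3 Mpos by (simp add: frac_less2)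
  moreover have "1 - (8/3)/mstar_total \<alpha> = qbar_star \<alpha>"
    unfolding mstar_total_def qbar_star_def using den by (simp add: field_simps)
  ultimately have P4: "Qtreat \<alpha> q1 q3 < qbar_star \<alpha>" unfolding Qt by linarith
  show ?thesis using P1 P2 P3 P4 by simp
qed

end
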